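(* Let $n\ge1$, $m=\lfloor n/2\rfloor$, $\rho\in(0,1)$, $j\in\mathbb Z$, and let $k\le l$ be integers. If $Z^{j}_m[l]_n\le Z^{\rho,1}_m[k]_n$, then $$L_j[l]_n-L_j[k]_n\le L^{\rho,1}_m[l]_n-L^{\rho,1}_m[k]_n.$$ If $Z^{\rho,1}_m[l]_n\le Z^{j}_m[k]_n$, then $$L^{\rho,1}_m[l]_n-L^{\rho,1}_m[k]_n\le L_j[l]_n-L_j[k]_n.$$
   Context: Let $\omega=\{\omega_{i,j}:(i,j)\in\mathbb Z^2,\ i+j>0\}$ be i.i.d. exponential random variables with parameter $1$. Write $(i,j)\le(k,l)$ if $i\le k$ and $j\le l$. An up-right path from $\mathbf x$ to $\mathbf y$ is a sequence $\mathbf x=\mathbf x_0,\dots,\mathbf x_m=\mathbf y$ with increments in $\{(1,0),(0,1)\}$; its passage time is $\sum_{i=1}^m\omega_{\mathbf x_i}$ (starting point excluded). For $\mathbf x=(i,j)\le\mathbf y$ with $i+j\ge0$, $L(\mathbf x,\mathbf y)$ is the maximal passage time over up-right paths, and the geodesic from $\mathbf x$ to $\mathbf y$ is the (a.s. unique) path attaining it. For integer $k$, $[k]_n:=(n+k,n-k)$ and $L_k(\mathbf x):=L([k]_0,\mathbf x)$. For $\rho\in(0,1)$, let $\mathrm s^1_\rho$ be a stationary profile independent of $\omega$: $\mathrm s^1_\rho(0)=0$, $\mathrm s^1_\rho(k)=\sum_{i=1}^k\zeta_i$ ($k>0$), $\mathrm s^1_\rho(k)=-\sum_{i=k+1}^0\zeta_i$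 ($k<0$), with $\zeta_i$ i.i.d. copies of $E_1-E_2$, $E_1,E_2$ independent exponentials of rates $1-\rho$ and $\rho$. Define $L^{\rho,1}_m[k]_n:=\max\{\mathrm s^1_\rho(i)+L([i]_m,[k]_n): i\in\mathbb Z,\ [i]_m\le[k]_n\}$ and let $Z^{\rho,1}_m[k]_n$ be the largest maximizing $i$. For $j$ with $[j]_0\le[k]_n$, let $Z^j_m[k]_n$ be the integer $z$ such that $[z]_m$ is the point where the geodesic from $[j]_0$ to $[k]_n$ meets the anti-diagonal $\{(m+i,m-i):i\in\mathbb Z\}$. *)

theory Defs
  imports "HOL-Probability.Probability"
begin

(* [k]_n = (n+k, n-k) *)
definition pt :: "int \<Rightarrow> int \<Rightarrow> int \<times> int" where
  "pt k n = (n + k, n - k)"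

definition ple :: "int \<times> int \<Rightarrow> int \<times> int \<Rightarrow> bool" where
  "ple x y \<longleftrightarrow> fst x \<le> fst y \<and> snd x \<le> snd y"

definition is_path :: "int \<times> int \<Rightarrow> int \<times> int \<Rightarrow> (int \<times> int) list \<Rightarrow> bool" where
  "is_path x y xs \<longleftrightarrow> xs \<noteq> [] \<and> hd xs = x \<and> last xs = y \<and>
     (\<forall>i. Suc i < length xs \<longrightarrow>
        (xs ! Suc i = (fst (xs ! i) + 1, snd (xs ! i)) \<or>
         xs ! Suc i = (fst (xs ! i), snd (xs ! i) + 1)))"

(* passage time: starting point excluded *)
definition weight :: "(int \<times> int \<Rightarrow> real) \<Rightarrow> (int \<times> int) list \<Rightarrow> real" where
  "weight w xs = sum_list (map w (tl xs))"

definition LPP :: "(int \<times> int \<Rightarrow> real) \<Rightarrow> int \<times> int \<Rightarrow> int \<times> int \<Rightarrow> real" where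
  "LPP w x y = Max {weight w xs | xs. is_path x y xs}"

(* the geodesic (a maximizing path; a.s. unique) *)
definition geod :: "(int \<times> int \<Rightarrow> real) \<Rightarrow> int \<times> int \<Rightarrow> int \<times> int \<Rightarrow> (int \<times> int) list" where
  "geod w x y = (SOME xs. is_path x y xs \<and> weight w xs = LPP w x y)"

definition Lj :: "(int \<times> int \<Rightarrow> real) \<Rightarrow> int \<Rightarrow> int \<times> int \<Rightarrow> real" where
  "Lj w j x = LPP w (pt j 0) x"

(* Z^j_m[k]_n: where the geodesic from [j]_0 to [k]_n meets the anti-diagonal of level m *)
definition Zgeo :: "(int \<times> int \<Rightarrow> real) \<Rightarrow> int \<Rightarrow> int \<Rightarrow> int \<Rightarrow> int \<Rightarrow> int" where
  "Zgeo w j m k n = (THE z. pt z m \<in> set (geod w (pt j 0) (pt k n)))"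

(* stationary profile s^1_rho built from increments zeta *)
definition profile :: "(int \<Rightarrow> real) \<Rightarrow> int \<Rightarrow> real" where
  "profile z k = (if 0 \<le> k then (\<Sum>i\<in>{1..k}. z i) else - (\<Sum>i\<in>{k+1..0}. z i))"

definition Lrho :: "(int \<times> int \<Rightarrow> real) \<Rightarrow> (int \<Rightarrow> real) \<Rightarrow> int \<Rightarrow> int \<Rightarrow> int \<Rightarrow> real" where
  "Lrho w s m k n = Max {s i + LPP w (pt i m) (pt k n) | i. ple (pt i m) (pt k n)}"

definition Zrho :: "(int \<times> int \<Rightarrow> real) \<Rightarrow> (int \<Rightarrow> real) \<Rightarrow> int \<Rightarrow> int \<Rightarrow> int \<Rightarrow> int" where
  "Zrho w s m k n = Max {i. ple (pt i m) (pt k n) \<and> s i + LPP w (pt i m) (pt k n) = Lrho w s m k n}"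

end

theory Submission
  imports Defs
begin


definition stp :: "int \<times> int \<Rightarrow> int \<times> int \<Rightarrow> bool" where
  "stp a b \<longleftrightarrow> b = (fst a + 1, snd a) \<or> b = (fst a, snd a + 1)"

definition lev :: "int \<times> int \<Rightarrow> int" where "lev p = fst p + snd p"
definition dif :: "int \<times> int \<Rightarrow> int" where "dif p = fst p - snd p"

lemma is_path_single: "is_path x y [p] \<longleftrightarrow> p = x \<and> x = y"
  by (auto simp: is_path_def)

lemma is_path_Cons2: "is_path x y (p#q#xs) \<longleftrightarrow> p = x \<and> stp x q \<and> is_path q y (q#xs)"
proof
  assume H: "is_path x y (p#q#xs)"
  then have a: "p = x" by (simp add: is_path_def)
  have "stp x q" using H a unfolding is_path_def stp_def
    by (metis One_nat_def Suc_less_eq length_Cons nth_Cons_0 nth_Cons_Suc zero_less_Suc)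
  moreover have "is_path q y (q#xs)" using H unfolding is_path_def
    apply (simp)
    by (metis Suc_less_eq length_Cons nth_Cons_Suc)
  ultimately show "p = x \<and> stp x q \<and> is_path q y (q#xs)" using a by simp
next
  assume H: "p = x \<and> stp x q \<and> is_path q y (q#xs)"
  show "is_path x y (p#q#xs)" unfolding is_path_def
  proof (intro conjI allI impI)
    fix i assume i: "Suc i < length (p#q#xs)"
    show "(p # q # xs) ! Suc i = (fst ((p # q # xs) ! i) + 1, snd ((p # q # xs) ! i)) \<or>
         (p # q # xs) ! Suc i = (fst ((p # q # xs) ! i), snd ((p # q # xs) ! i) + 1)"
    proof (cases i)
      case 0 then show ?thesis using H by (simp add: stp_def)
    next
      case (Suc i') then show ?thesis using H i unfolding is_path_def
        by (metis Suc_less_eq length_Cons nth_Cons_Suc)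
    qed
  qed (use H in \<open>auto simp: is_path_def\<close>)
qed

lemma is_path_Cons: "is_path x y (p#xs) \<longleftrightarrow> p = x \<and> (if xs = [] then x = y else stp x (hd xs) \<and> is_path (hd xs) y xs)"
  by (cases xs) (auto simp: is_path_single is_path_Cons2)

lemma is_path_nonempty: "is_path x y xs \<Longrightarrow> xs \<noteq> []"
  by (simp add: is_path_def)

lemma is_path_hd: "is_path x y xs \<Longrightarrow> hd xs = x"
  by (simp add: is_path_def)

lemma path_concat:
  "is_path x c xs \<Longrightarrow> is_path c y ys \<Longrightarrow> is_path x y (xs @ tl ys)"
proof (induction xs arbitrary: x)
  case Nil then show ?case by (simp add: is_path_def)
next
  case (Cons p xs)
  show ?case
  proof (cases "xs = []")
    case True
    then have "p = x" "x = c" using Cons.prems by (auto simp: is_path_Cons)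
    moreover have "ys = c # tl ys" using Cons.prems(2)
      by (metis is_path_hd is_path_nonempty list.exhaust_sel)
    ultimately show ?thesis using True Cons.prems(2) by simp
  next
    case False
    then have h: "p = x" "stp x (hd xs)" "is_path (hd xs) c xs" using Cons.prems by (auto simp: is_path_Cons)
    have "is_path (hd xs) y (xs @ tl ys)" using Cons.IH[OF h(3) Cons.prems(2)] .
    then show ?thesis using h False by (simp add: is_path_Cons)
  qed
qed

lemma weight_concat: "xs \<noteq> [] \<Longrightarrow> weight w (xs @ tl ys) = weight w xs + weight w ys"
  by (simp add: weight_def)

lemma path_split:
  "is_path x y xs \<Longrightarrow> c \<in> set xs \<Longrightarrow> \<exists>as bs. is_path x c as \<and> is_path c y bs \<and> xs = as @ tl bs"
proof (induction xs arbitrary: x)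
  case Nil then show ?case by simp
next
  case (Cons p xs)
  show ?case
  proof (cases "c = p")
    case True
    then show ?thesis using Cons.prems
      by (intro exI[of _ "[p]"] exI[of _ "p#xs"]) (auto simp: is_path_Cons)
  next
    case False
    then have c: "c \<in> set xs" using Cons.prems by simp
    then have ne: "xs \<noteq> []" by auto
    then have h: "p = x" "stp x (hd xs)" "is_path (hd xs) y xs" using Cons.prems by (auto simp: is_path_Cons)
    obtain as bs where ab: "is_path (hd xs) c as" "is_path c y bs" "xs = as @ tl bs"
      using Cons.IH[OF h(3) c] by blast
    have "as \<noteq> []" "hd as = hd xs" using ab(1) by (auto simp: is_path_def)
    then have "is_path x c (p # as)" using h ab by (simp add: is_path_Cons)
    then show ?thesis using ab h by (intro exI[of _ "p#as"] exI[of _ bs]) simp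
  qed
qed

lemma path_lev: "is_path x y xs \<Longrightarrow> i < length xs \<Longrightarrow> lev (xs ! i) = lev x + int i"
proof (induction xs arbitrary: x i)
  case Nil then show ?case by simp
next
  case (Cons p xs)
  show ?case
  proof (cases i)
    case 0 then show ?thesis using Cons.prems by (simp add: is_path_Cons)
  next
    case (Suc i')
    then have ne: "xs \<noteq> []" using Cons.prems by auto
    then have h: "p = x" "stp x (hd xs)" "is_path (hd xs) y xs" using Cons.prems by (auto simp: is_path_Cons)
    have "lev (xs ! i') = lev (hd xs) + int i'" using Cons.IH[OF h(3)] Suc Cons.prems by simp
    moreover have "lev (hd xs) = lev x + 1" using h(2) by (auto simp: stp_def lev_def)
    ultimately show ?thesis using Suc by simp
  qed
qed

lemma path_lev_end: "is_path x y xs \<Longrightarrow> lev y = lev x + int (length xs - 1)"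
proof -
  assume P: "is_path x y xs"
  then have "xs \<noteq> []" "last xs = y" by (auto simp: is_path_def)
  then have "y = xs ! (length xs - 1)" by (simp add: last_conv_nth)
  then show ?thesis using path_lev[OF P, of "length xs - 1"] \<open>xs \<noteq> []\<close> by simp
qed

lemma path_box: "is_path x y xs \<Longrightarrow> ple x y \<and> (\<forall>p\<in>set xs. ple x p \<and> ple p y)"
proof (induction xs arbitrary: x)
  case Nil then show ?case by (simp add: is_path_def)
next
  case (Cons p xs)
  show ?case
  proof (cases "xs = []")
    case True then show ?thesis using Cons.prems by (auto simp: is_path_Cons ple_def)
  next
    case False
    then have h: "p = x" "stp x (hd xs)" "is_path (hd xs) y xs" using Cons.prems by (auto simp: is_path_Cons)
    have "ple x (hd xs)" using h(2) by (auto simp: stp_def ple_def)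
    then show ?thesis using Cons.IH[OF h(3)] h(1) by (auto simp: ple_def)
  qed
qed

lemma path_exists: "ple x y \<Longrightarrow> \<exists>xs. is_path x y xs"
proof (induction "nat (lev y - lev x)" arbitrary: x)
  case 0
  then have "x = y" by (auto simp: ple_def lev_def prod_eq_iff)
  then show ?case by (intro exI[of _ "[x]"]) (simp add: is_path_single)
next
  case (Suc N)
  show ?case
  proof (cases "fst x < fst y")
    case True
    define q where "q = (fst x + 1, snd x)"
    have "ple q y" "N = nat (lev y - lev q)" using True Suc.prems Suc.hyps(2) by (auto simp: q_def ple_def lev_def)
    then obtain qs where "is_path q y qs" using Suc.hyps(1) by blast
    moreover have "qs \<noteq> []" "hd qs = q" using calculation by (auto simp: is_path_def)
    ultimately show ?thesis by (intro exI[of _ "x#qs"]) (simp add: is_path_Cons stp_def q_def)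
  next
    case False
    define q where "q = (fst x, snd x + 1)"
    have "ple q y" "N = nat (lev y - lev q)" using False Suc.prems Suc.hyps(2) by (auto simp: q_def ple_def lev_def)
    then obtain qs where "is_path q y qs" using Suc.hyps(1) by blast
    moreover have "qs \<noteq> []" "hd qs = q" using calculation by (auto simp: is_path_def)
    ultimately show ?thesis by (intro exI[of _ "x#qs"]) (simp add: is_path_Cons stp_def q_def)
  qed
qed

lemma finite_paths: "finite {xs. is_path x y xs}"
proof (rule finite_subset)
  let ?B = "{fst x..fst y} \<times> {snd x..snd y}"
  show "{xs. is_path x y xs} \<subseteq> {xs. set xs \<subseteq> ?B \<and> length xs = nat (lev y - lev x) + 1}"
  proof
    fix xs assume "xs \<in> {xs. is_path x y xs}"
    then have P: "is_path x y xs" by simp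
    have "set xs \<subseteq> ?B" using path_box[OF P] by (auto simp: ple_def)
    moreover have "length xs = nat (lev y - lev x) + 1"
      using path_lev_end[OF P] is_path_nonempty[OF P] by (cases xs) auto
    ultimately show "xs \<in> {xs. set xs \<subseteq> ?B \<and> length xs = nat (lev y - lev x) + 1}" by simp
  qed
  show "finite {xs. set xs \<subseteq> ?B \<and> length xs = nat (lev y - lev x) + 1}"
    by (rule finite_lists_length_eq) simp
qed

lemma weights_eq: "{weight w xs | xs. is_path x y xs} = weight w ` {xs. is_path x y xs}"
  by auto

lemma LPP_ge: "is_path x y xs \<Longrightarrow> weight w xs \<le> LPP w x y"
  unfolding LPP_def weights_eq by (rule Max_ge) (auto intro: finite_imageI finite_paths)

lemma LPP_attained: "ple x y \<Longrightarrow> \<exists>xs. is_path x y xs \<and> weight w xs = LPP w x y"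
proof -
  assume "ple x y"
  then obtain xs where "is_path x y xs" using path_exists by blast
  then have "LPP w x y \<in> weight w ` {xs. is_path x y xs}"
    unfolding LPP_def weights_eq by (intro Max_in) (auto intro: finite_imageI finite_paths)
  then show ?thesis by auto
qed

lemma geod_prop: "ple x y \<Longrightarrow> is_path x y (geod w x y) \<and> weight w (geod w x y) = LPP w x y"
  unfolding geod_def by (rule someI_ex) (rule LPP_attained)

lemma crossing:
  "is_path a b xs \<Longrightarrow> is_path a' b' ys \<Longrightarrow> lev a = lev a' \<Longrightarrow> lev b = lev b' \<Longrightarrow>
   dif a \<le> dif a' \<Longrightarrow> dif b' \<le> dif b \<Longrightarrow> \<exists>c. c \<in> set xs \<and> c \<in> set ys"
proof (induction xs arbitrary: a a' ys)
  case Nil then show ?case by (simp add: is_path_def)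
next
  case (Cons p xs)
  have pa: "p = a" using Cons.prems(1) by (simp add: is_path_Cons)
  obtain q' ys' where ys: "ys = q' # ys'" using is_path_nonempty[OF Cons.prems(2)] by (cases ys) auto
  have qa: "q' = a'" using Cons.prems(2) ys by (simp add: is_path_Cons)
  show ?case
  proof (cases "dif a = dif a'")
    case True
    then have "a = a'" using Cons.prems(3) by (auto simp: lev_def dif_def prod_eq_iff)
    then show ?thesis using pa qa ys by (intro exI[of _ a]) auto
  next
    case False
    have e: "dif a' - dif a = 2 * (snd a - snd a')" using Cons.prems(3) by (simp add: lev_def dif_def)
    have lt: "dif a + 2 \<le> dif a'" using False Cons.prems(5) e by presburger
    have l1: "lev b = lev a + int (length xs)" using path_lev_end[OF Cons.prems(1)] by simp
    have l2: "lev b' = lev a' + int (length ys')" using path_lev_end[OF Cons.prems(2)] ys by simp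
    show ?thesis
    proof (cases "xs = []")
      case True
      then have "b = a" using Cons.prems(1) by (simp add: is_path_Cons)
      moreover have "ys' = []" using l1 l2 True Cons.prems(3,4) by simp
      then have "b' = a'" using Cons.prems(2) ys by (simp add: is_path_Cons)
      ultimately show ?thesis using Cons.prems(6) lt by simp
    next
      case False
      then have h: "stp a (hd xs)" "is_path (hd xs) b xs" using Cons.prems(1) by (auto simp: is_path_Cons)
      have "ys' \<noteq> []" using l1 l2 False Cons.prems(3,4) by auto
      then have h': "stp a' (hd ys')" "is_path (hd ys') b' ys'" using Cons.prems(2) ys by (auto simp: is_path_Cons)
      have "lev (hd xs) = lev (hd ys')" "dif (hd xs) \<le> dif (hd ys')"
        using h(1) h'(1) lt Cons.prems(3) by (auto simp: stp_def lev_def dif_def)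
      then obtain c where "c \<in> set xs" "c \<in> set ys'"
        using Cons.IH[OF h(2) h'(2) _ Cons.prems(4) _ Cons.prems(6)] by blast
      then show ?thesis using ys by (intro exI[of _ c]) auto
    qed
  qed
qed



lemma lev_pt: "lev (pt z m) = 2 * m" and dif_pt: "dif (pt z m) = 2 * z"
  by (simp_all add: lev_def dif_def pt_def)

lemma Zgeo_mem:
  assumes A: "ple (pt j 0) (pt k n)" "0 \<le> m" "m \<le> n"
  shows "pt (Zgeo w j m k n) m \<in> set (geod w (pt j 0) (pt k n))"
proof -
  define g where "g = geod w (pt j 0) (pt k n)"
  have P: "is_path (pt j 0) (pt k n) g" using geod_prop[OF A(1)] g_def by simp
  have len: "int (length g - 1) = 2 * n" using path_lev_end[OF P] by (simp add: lev_pt)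
  have ne: "g \<noteq> []" using P by (rule is_path_nonempty)
  have ex: "\<exists>z. pt z m \<in> set g"
  proof -
    define i where "i = nat (2 * m)"
    have "length g \<noteq> 0" using ne by simp
    then have "int (length g) = 2 * n + 1" using len by linarith
    then have il: "i < length g" using A unfolding i_def by (subst nat_less_iff) auto
    have "lev (g ! i) = 2 * m" using path_lev[OF P il] A by (simp add: lev_pt i_def)
    then have "pt (fst (g ! i) - m) m = g ! i" by (simp add: pt_def lev_def prod_eq_iff)
    moreover have "g ! i \<in> set g" using il by (rule nth_mem)
    ultimately show ?thesis by (intro exI[of _ "fst (g ! i) - m"]) simp
  qed
  have un: "z = z'" if zz: "pt z m \<in> set g" "pt z' m \<in> set g" for z z'
  proof -
    obtain i where i: "i < length g" "g ! i = pt z m" using zz(1) unfolding in_set_conv_nth by blast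
    obtain i' where i': "i' < length g" "g ! i' = pt z' m" using zz(2) unfolding in_set_conv_nth by blast
    have "int i = int i'" using path_lev[OF P i(1)] path_lev[OF P i'(1)] i i' by (simp add: lev_pt)
    then have "i = i'" by simp
    then show ?thesis using i i' by (simp add: pt_def)
  qed
  have "\<exists>!z. pt z m \<in> set g" using ex un by blast
  then show ?thesis unfolding Zgeo_def g_def[symmetric] by (rule theI')
qed

lemma idx_finite: "finite {i. ple (pt i m) (pt k n)}"
  by (rule finite_subset[of _ "{k + m - n .. k + n - m}"]) (auto simp: ple_def pt_def)

lemma Lrho_eq: "{s i + LPP w (pt i m) (pt k n) | i. ple (pt i m) (pt k n)}
   = (\<lambda>i. s i + LPP w (pt i m) (pt k n)) ` {i. ple (pt i m) (pt k n)}"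
  by auto

lemma Lrho_ge: "ple (pt i m) (pt k n) \<Longrightarrow> s i + LPP w (pt i m) (pt k n) \<le> Lrho w s m k n"
  unfolding Lrho_def Lrho_eq by (rule Max_ge) (auto intro: finite_imageI idx_finite)

lemma Zrho_prop:
  assumes "m \<le> n"
  shows "ple (pt (Zrho w s m k n) m) (pt k n) \<and>
     s (Zrho w s m k n) + LPP w (pt (Zrho w s m k n) m) (pt k n) = Lrho w s m k n"
proof -
  have "ple (pt k m) (pt k n)" using assms by (simp add: ple_def pt_def)
  then have "Lrho w s m k n \<in> (\<lambda>i. s i + LPP w (pt i m) (pt k n)) ` {i. ple (pt i m) (pt k n)}"
    unfolding Lrho_def Lrho_eq by (intro Max_in) (auto intro: finite_imageI idx_finite)
  then have ne: "{i. ple (pt i m) (pt k n) \<and> s i + LPP w (pt i m) (pt k n) = Lrho w s m k n} \<noteq> {}"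
    by auto
  have fin: "finite {i. ple (pt i m) (pt k n) \<and> s i + LPP w (pt i m) (pt k n) = Lrho w s m k n}"
    by (rule finite_subset[OF _ idx_finite]) auto
  show ?thesis using Max_in[OF fin ne] unfolding Zrho_def by simp
qed



lemma det:
  fixes w :: "int \<times> int \<Rightarrow> real" and s :: "int \<Rightarrow> real"
  assumes A: "0 \<le> m" "m \<le> n" "k \<le> l" "ple (pt j 0) (pt k n)" "ple (pt j 0) (pt l n)"
  shows "(Zgeo w j m l n \<le> Zrho w s m k n \<longrightarrow>
        Lj w j (pt l n) - Lj w j (pt k n) \<le> Lrho w s m l n - Lrho w s m k n)
    \<and> (Zrho w s m l n \<le> Zgeo w j m k n \<longrightarrow>
        Lrho w s m l n - Lrho w s m k n \<le> Lj w j (pt l n) - Lj w j (pt k n))"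
proof (intro conjI impI)
  assume Z: "Zgeo w j m l n \<le> Zrho w s m k n"
  define z1 where "z1 = Zgeo w j m l n"
  define z2 where "z2 = Zrho w s m k n"
  define g where "g = geod w (pt j 0) (pt l n)"
  have gP: "is_path (pt j 0) (pt l n) g" "weight w g = Lj w j (pt l n)"
    using geod_prop[OF A(5)] by (auto simp: g_def Lj_def)
  have "pt z1 m \<in> set g" using Zgeo_mem[OF A(5) A(1,2)] by (simp add: z1_def g_def)
  then obtain ga gb where gab: "is_path (pt j 0) (pt z1 m) ga" "is_path (pt z1 m) (pt l n) gb" "g = ga @ tl gb"
    using path_split[OF gP(1)] by blast
  have zr: "ple (pt z2 m) (pt k n)" "s z2 + LPP w (pt z2 m) (pt k n) = Lrho w s m k n"
    using Zrho_prop[OF A(2)] by (auto simp: z2_def)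
  obtain p where pP: "is_path (pt z2 m) (pt k n) p" "weight w p = LPP w (pt z2 m) (pt k n)"
    using LPP_attained[OF zr(1)] by blast
  obtain c where c: "c \<in> set gb" "c \<in> set p"
  proof -
    have d1: "dif (pt z1 m) \<le> dif (pt z2 m)" using Z by (simp add: dif_pt z1_def z2_def)
    have d2: "dif (pt k n) \<le> dif (pt l n)" using A(3) by (simp add: dif_pt)
    show ?thesis using crossing[OF gab(2) pP(1) _ _ d1 d2] that unfolding lev_pt by blast
  qed
  obtain gb1 gb2 where gb: "is_path (pt z1 m) c gb1" "is_path c (pt l n) gb2" "gb = gb1 @ tl gb2"
    using path_split[OF gab(2) c(1)] by blast
  obtain p1 p2 where pp: "is_path (pt z2 m) c p1" "is_path c (pt k n) p2" "p = p1 @ tl p2"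
    using path_split[OF pP(1) c(2)] by blast
  have ne: "ga \<noteq> []" "gb1 \<noteq> []" "p1 \<noteq> []" using gab gb pp by (auto dest: is_path_nonempty)
  have e1: "Lj w j (pt l n) = weight w ga + weight w gb1 + weight w gb2"
  proof -
    have w1: "weight w g = weight w ga + weight w gb" unfolding gab(3) by (rule weight_concat[OF ne(1)])
    have w2: "weight w gb = weight w gb1 + weight w gb2" unfolding gb(3) by (rule weight_concat[OF ne(2)])
    show ?thesis using gP(2) w1 w2 by linarith
  qed
  have e2: "Lrho w s m k n = s z2 + weight w p1 + weight w p2"
  proof -
    have w1: "weight w p = weight w p1 + weight w p2" unfolding pp(3) by (rule weight_concat[OF ne(3)])
    show ?thesis using zr(2) pP(2) w1 by linarith
  qed
  have i1: "weight w ga + weight w gb1 + weight w p2 \<le> Lj w j (pt k n)"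
  proof -
    have "is_path (pt j 0) (pt k n) (ga @ tl (gb1 @ tl p2))"
      by (intro path_concat[OF gab(1)] path_concat[OF gb(1) pp(2)])
    then have "weight w (ga @ tl (gb1 @ tl p2)) \<le> Lj w j (pt k n)" unfolding Lj_def by (rule LPP_ge)
    moreover have "weight w (ga @ tl (gb1 @ tl p2)) = weight w ga + weight w (gb1 @ tl p2)"
      by (rule weight_concat[OF ne(1)])
    moreover have "weight w (gb1 @ tl p2) = weight w gb1 + weight w p2"
      by (rule weight_concat[OF ne(2)])
    ultimately show ?thesis by linarith
  qed
  have i2: "s z2 + weight w p1 + weight w gb2 \<le> Lrho w s m l n"
  proof -
    have P: "is_path (pt z2 m) (pt l n) (p1 @ tl gb2)" by (rule path_concat[OF pp(1) gb(2)])
    have "weight w (p1 @ tl gb2) \<le> LPP w (pt z2 m) (pt l n)" using P by (rule LPP_ge)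
    moreover have "s z2 + LPP w (pt z2 m) (pt l n) \<le> Lrho w s m l n"
      using path_box[OF P] by (intro Lrho_ge) simp
    moreover have "weight w (p1 @ tl gb2) = weight w p1 + weight w gb2"
      by (rule weight_concat[OF ne(3)])
    ultimately show ?thesis by linarith
  qed
  show "Lj w j (pt l n) - Lj w j (pt k n) \<le> Lrho w s m l n - Lrho w s m k n"
    using e1 e2 i1 i2 by linarith
next
  assume Z: "Zrho w s m l n \<le> Zgeo w j m k n"
  define z1 where "z1 = Zrho w s m l n"
  define z2 where "z2 = Zgeo w j m k n"
  define g where "g = geod w (pt j 0) (pt k n)"
  have gP: "is_path (pt j 0) (pt k n) g" "weight w g = Lj w j (pt k n)"
    using geod_prop[OF A(4)] by (auto simp: g_def Lj_def)
  have "pt z2 m \<in> set g" using Zgeo_mem[OF A(4) A(1,2)] by (simp add: z2_def g_def)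
  then obtain ga gb where gab: "is_path (pt j 0) (pt z2 m) ga" "is_path (pt z2 m) (pt k n) gb" "g = ga @ tl gb"
    using path_split[OF gP(1)] by blast
  have zr: "ple (pt z1 m) (pt l n)" "s z1 + LPP w (pt z1 m) (pt l n) = Lrho w s m l n"
    using Zrho_prop[OF A(2)] by (auto simp: z1_def)
  obtain p where pP: "is_path (pt z1 m) (pt l n) p" "weight w p = LPP w (pt z1 m) (pt l n)"
    using LPP_attained[OF zr(1)] by blast
  obtain c where c: "c \<in> set p" "c \<in> set gb"
  proof -
    have d1: "dif (pt z1 m) \<le> dif (pt z2 m)" using Z by (simp add: dif_pt z1_def z2_def)
    have d2: "dif (pt k n) \<le> dif (pt l n)" using A(3) by (simp add: dif_pt)
    show ?thesis using crossing[OF pP(1) gab(2) _ _ d1 d2] that unfolding lev_pt by blast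
  qed
  obtain gb1 gb2 where gb: "is_path (pt z2 m) c gb1" "is_path c (pt k n) gb2" "gb = gb1 @ tl gb2"
    using path_split[OF gab(2) c(2)] by blast
  obtain p1 p2 where pp: "is_path (pt z1 m) c p1" "is_path c (pt l n) p2" "p = p1 @ tl p2"
    using path_split[OF pP(1) c(1)] by blast
  have ne: "ga \<noteq> []" "gb1 \<noteq> []" "p1 \<noteq> []" using gab gb pp by (auto dest: is_path_nonempty)
  have e1: "Lj w j (pt k n) = weight w ga + weight w gb1 + weight w gb2"
  proof -
    have w1: "weight w g = weight w ga + weight w gb" unfolding gab(3) by (rule weight_concat[OF ne(1)])
    have w2: "weight w gb = weight w gb1 + weight w gb2" unfolding gb(3) by (rule weight_concat[OF ne(2)])
    show ?thesis using gP(2) w1 w2 by linarith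
  qed
  have e2: "Lrho w s m l n = s z1 + weight w p1 + weight w p2"
  proof -
    have w1: "weight w p = weight w p1 + weight w p2" unfolding pp(3) by (rule weight_concat[OF ne(3)])
    show ?thesis using zr(2) pP(2) w1 by linarith
  qed
  have i1: "weight w ga + weight w gb1 + weight w p2 \<le> Lj w j (pt l n)"
  proof -
    have "is_path (pt j 0) (pt l n) (ga @ tl (gb1 @ tl p2))"
      by (intro path_concat[OF gab(1)] path_concat[OF gb(1) pp(2)])
    then have "weight w (ga @ tl (gb1 @ tl p2)) \<le> Lj w j (pt l n)" unfolding Lj_def by (rule LPP_ge)
    moreover have "weight w (ga @ tl (gb1 @ tl p2)) = weight w ga + weight w (gb1 @ tl p2)"
      by (rule weight_concat[OF ne(1)])
    moreover have "weight w (gb1 @ tl p2) = weight w gb1 + weight w p2"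
      by (rule weight_concat[OF ne(2)])
    ultimately show ?thesis by linarith
  qed
  have i2: "s z1 + weight w p1 + weight w gb2 \<le> Lrho w s m k n"
  proof -
    have P: "is_path (pt z1 m) (pt k n) (p1 @ tl gb2)" by (rule path_concat[OF pp(1) gb(2)])
    have "weight w (p1 @ tl gb2) \<le> LPP w (pt z1 m) (pt k n)" using P by (rule LPP_ge)
    moreover have "s z1 + LPP w (pt z1 m) (pt k n) \<le> Lrho w s m k n"
      using path_box[OF P] by (intro Lrho_ge) simp
    moreover have "weight w (p1 @ tl gb2) = weight w p1 + weight w gb2"
      by (rule weight_concat[OF ne(3)])
    ultimately show ?thesis by linarith
  qed
  show "Lrho w s m l n - Lrho w s m k n \<le> Lj w j (pt l n) - Lj w j (pt k n)"
    using e1 e2 i1 i2 by linarith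
qed



theorem lemma7:
  fixes M :: "'a measure" and \<omega> :: "int \<times> int \<Rightarrow> 'a \<Rightarrow> real" and \<zeta> :: "int \<Rightarrow> 'a \<Rightarrow> real"
    and \<rho> :: real and n m j k l :: int
  assumes "prob_space M"
    and indep: "prob_space.indep_vars M (\<lambda>_. borel)
          (\<lambda>i. case i of Inl p \<Rightarrow> \<omega> p | Inr q \<Rightarrow> \<zeta> q)
          (Inl ` {p. fst p + snd p > 0} \<union> range Inr)"
    and omega_exp: "\<And>p. fst p + snd p > 0 \<Longrightarrow> distributed M lborel (\<omega> p) (exponential_density 1)"
    and zeta_dist: "\<And>i. distr M borel (\<zeta> i) =
          distr (density lborel (exponential_density (1 - \<rho>)) \<Otimes>\<^sub>M density lborel (exponential_density \<rho>))
                borel (\<lambda>(a, b). a - b)"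
    and "n \<ge> 1" and "m = n div 2" and "0 < \<rho>" and "\<rho> < 1" and "k \<le> l"
    and "ple (pt j 0) (pt k n)" and "ple (pt j 0) (pt l n)"
  shows "AE x in M.
     (Zgeo (\<lambda>p. \<omega> p x) j m l n \<le> Zrho (\<lambda>p. \<omega> p x) (profile (\<lambda>i. \<zeta> i x)) m k n \<longrightarrow>
        Lj (\<lambda>p. \<omega> p x) j (pt l n) - Lj (\<lambda>p. \<omega> p x) j (pt k n)
          \<le> Lrho (\<lambda>p. \<omega> p x) (profile (\<lambda>i. \<zeta> i x)) m l n - Lrho (\<lambda>p. \<omega> p x) (profile (\<lambda>i. \<zeta> i x)) m k n)
   \<and> (Zrho (\<lambda>p. \<omega> p x) (profile (\<lambda>i. \<zeta> i x)) m l n \<le> Zgeo (\<lambda>p. \<omega> p x) j m k n \<longrightarrow>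
        Lrho (\<lambda>p. \<omega> p x) (profile (\<lambda>i. \<zeta> i x)) m l n - Lrho (\<lambda>p. \<omega> p x) (profile (\<lambda>i. \<zeta> i x)) m k n
          \<le> Lj (\<lambda>p. \<omega> p x) j (pt l n) - Lj (\<lambda>p. \<omega> p x) j (pt k n))"
proof (rule AE_I2)
  fix x
  have "0 \<le> m" "m \<le> n" using assms(5,6) by auto
  then show "(Zgeo (\<lambda>p. \<omega> p x) j m l n \<le> Zrho (\<lambda>p. \<omega> p x) (profile (\<lambda>i. \<zeta> i x)) m k n \<longrightarrow>
        Lj (\<lambda>p. \<omega> p x) j (pt l n) - Lj (\<lambda>p. \<omega> p x) j (pt k n)
          \<le> Lrho (\<lambda>p. \<omega> p x) (profile (\<lambda>i. \<zeta> i x)) m l n - Lrho (\<lambda>p. \<omega> p x) (profile (\<lambda>i. \<zeta> i x)) m k n)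
   \<and> (Zrho (\<lambda>p. \<omega> p x) (profile (\<lambda>i. \<zeta> i x)) m l n \<le> Zgeo (\<lambda>p. \<omega> p x) j m k n \<longrightarrow>
        Lrho (\<lambda>p. \<omega> p x) (profile (\<lambda>i. \<zeta> i x)) m l n - Lrho (\<lambda>p. \<omega> p x) (profile (\<lambda>i. \<zeta> i x)) m k n
          \<le> Lj (\<lambda>p. \<omega> p x) j (pt l n) - Lj (\<lambda>p. \<omega> p x) j (pt k n))"
    by (rule det) (use assms(9,10,11) in auto)
qed

end
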